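(* Under the standing assumptions: (i) $v(P)\ge v(D^F)$ if and only if $\Omega\cap B\subseteq\operatorname{epi}(f-g+\delta_A)^c\cap B$. (ii) $v(P)\ge v(\bar D^F)$ if and only if $K\cap B\subseteq\operatorname{epi}(f-g+\delta_A)^c\cap B$.
   Context: Let $X$ be a nontrivial separated locally convex space with topological dual $X^*$, endowed with the topology $\sigma(X,X^* )$; $\langle x,x^*\rangle$ is the value of $x^*\in X^*$ at $x\in X$. Put $W:=X^*\times X^*\times\mathbb{R}$, $\mathbb{R}_{++}:=]0,+\infty[$ and $Z:=X^*\times X^*\times\mathbb{R}_{++}$. For $y^*\in X^*$, $\alpha\in\mathbb{R}$, let $H^-_{y^*,\alpha}:=\{x\in X:\langle x,y^*\rangle<\alpha\}$. The coupling function $c:X\times W\to\overline{\mathbb{R}}$ is $c(x,(x^*,y^*,\alpha)):=\langle x,x^*\rangle$ if $\langle x,y^*\rangle<\alpha$ and $:=+\infty$ otherwise. For $h:X\to\overline{\mathbb{R}}$ its $c$-conjugate is $h^c:W\to\overline{\mathbb{R}}$, $h^c(w):=\sup_{x\in X}\{c(x,w)-h(x)\}$, with the convention $(+\infty)+(-\infty)=(-\infty)+(+\infty)=(+\infty)-(+\infty)=(-\infty)-(-\infty)=-\infty$ (so for proper $h$, $h^c(x^*,y^*,\alpha)=h^*(x^* )$ if $\operatorname{dom}h\subseteq H^-_{y^*,\alpha}$ and $+\infty$ otherwise). Epigraphs of functions on $W$ are subsets of $W\times\mathbb{R}$. $\delta_A$ is the indicator function of $A$. For $E\subseteq W\times\mathbb{R}$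 and $e\in W\times\mathbb{R}$, $E-e:=\{z-e:z\in E\}$. Standing assumptions: $f,g:X\to\overline{\mathbb{R}}$ proper convex with $\operatorname{dom}f\subseteq\operatorname{dom}g$, $A\subseteq X$ nonempty, convention $(+\infty)-(+\infty)=+\infty$ in $f-g$; $v(P)=\inf_{x\in X}\{f(x)-g(x)+\delta_A(x)\}$. With $\varphi(u^*,v^*,\gamma;x^*,y^*,\alpha):=g^c(u^*,v^*,\gamma)-f^c(u^*-x^*,-y^*,\alpha)-\delta_A^c(x^*,y^*,\alpha)$: $v(D^F):=\sup_{(x^*,y^*,\alpha)\in Z}\inf_{(u^*,v^*,\gamma)\in\operatorname{dom}g^c}\varphi$ and $v(\bar D^F):=\inf_{(u^*,v^*,\gamma)\in\operatorname{dom}g^c}\sup_{(x^*,y^*,\alpha)\in Z}\varphi$. Sets: $B:=\{0\}\times\{0\}\times\mathbb{R}_{++}\times\mathbb{R}\subseteq W\times\mathbb{R}$; $\Omega:=\bigcup_{(x^*,y^*,\alpha)\in\operatorname{dom}\delta_A^c}\ \bigcap_{(u^*,v^*,\gamma)\in\operatorname{dom}g^c}\Big[\operatorname{epi}\big(f-c(\cdot,(-x^*,-y^*,\alpha))\big)^c-\big(u^*,0,0,g^c(u^*,v^*,\gamma)-\delta_A^c(x^*,y^*,\alpha)\big)\Big]$, $K:=\bigcap_{(u^*,v^*,\gamma)\in\operatorname{dom}g^c}\ \bigcup_{(x^*,y^*,\alpha)\in\operatorname{dom}\delta_A^c}\Big[\operatorname{epi}\big(f-c(\cdot,(-x^*,-y^*,\alpha))\big)^c-\big(u^*,0,0,g^c(u^*,v^*,\gamma)-\delta_A^c(x^*,y^*,\alpha)\big)\Big]$.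 *)

theory Defs
  imports "HOL-Analysis.Analysis" "HOL-Library.Extended_Real"
begin

definition lcs_topology :: "'a::real_vector topology \<Rightarrow> bool" where
  "lcs_topology T \<longleftrightarrow>
     topspace T = UNIV \<and>
     continuous_map (prod_topology T T) T (\<lambda>(x, y). x + y) \<and>
     continuous_map (prod_topology euclideanreal T) T (\<lambda>(c, x). c *\<^sub>R x) \<and>
     (\<forall>U. openin T U \<and> 0 \<in> U \<longrightarrow> (\<exists>V. openin T V \<and> convex V \<and> 0 \<in> V \<and> V \<subseteq> U)) \<and>
     Hausdorff_space T"

definition top_dual :: "'a::real_vector topology \<Rightarrow> ('a \<Rightarrow> real) set" where
  "top_dual T = {l. linear l \<and> continuous_map T euclideanreal l}"

text \<open>Subtraction with the convention (+inf)-(+inf) = (-inf)-(-inf) = -inf (used in c-conjugates).\<close>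
definition sub_lo :: "ereal \<Rightarrow> ereal \<Rightarrow> ereal" where
  "sub_lo a b = (if (a = \<infinity> \<and> b = \<infinity>) \<or> (a = -\<infinity> \<and> b = -\<infinity>) then -\<infinity> else a - b)"

text \<open>Subtraction with the convention (+inf)-(+inf) = +inf (used in f - g).\<close>
definition sub_up :: "ereal \<Rightarrow> ereal \<Rightarrow> ereal" where
  "sub_up a b = (if a = \<infinity> then \<infinity> else if a = -\<infinity> \<and> b = -\<infinity> then -\<infinity> else a - b)"

definition proper_fun :: "('a \<Rightarrow> ereal) \<Rightarrow> bool" where
  "proper_fun h \<longleftrightarrow> (\<forall>x. h x \<noteq> -\<infinity>) \<and> (\<exists>x. h x \<noteq> \<infinity>)"

definition convex_fun :: "('a::real_vector \<Rightarrow> ereal) \<Rightarrow> bool" where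
  "convex_fun h \<longleftrightarrow> convex {(x, r::real). h x \<le> ereal r}"

definition efdom :: "('a \<Rightarrow> ereal) \<Rightarrow> 'a set" where
  "efdom h = {x. h x < \<infinity>}"

definition indic :: "'a set \<Rightarrow> 'a \<Rightarrow> ereal" where
  "indic A x = (if x \<in> A then 0 else \<infinity>)"

type_synonym 'a dualtrip = "('a \<Rightarrow> real) \<times> ('a \<Rightarrow> real) \<times> real"

text \<open>W = X* x X* x R, inside the ambient type of triples.\<close>
definition Wset :: "('a \<Rightarrow> real) set \<Rightarrow> 'a dualtrip set" where
  "Wset Xs = Xs \<times> Xs \<times> UNIV"

definition Zset :: "('a \<Rightarrow> real) set \<Rightarrow> 'a dualtrip set" where
  "Zset Xs = Xs \<times> Xs \<times> {0<..}"

definition coup :: "'a \<Rightarrow> 'a dualtrip \<Rightarrow> ereal" where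
  "coup x w = (case w of (xs, ys, \<alpha>) \<Rightarrow> if ys x < \<alpha> then ereal (xs x) else \<infinity>)"

definition cconj :: "('a \<Rightarrow> ereal) \<Rightarrow> 'a dualtrip \<Rightarrow> ereal" where
  "cconj h w = (SUP x. sub_lo (coup x w) (h x))"

definition Wdom :: "('a \<Rightarrow> real) set \<Rightarrow> ('a dualtrip \<Rightarrow> ereal) \<Rightarrow> 'a dualtrip set" where
  "Wdom Xs k = {w \<in> Wset Xs. k w < \<infinity>}"

definition Wepi :: "('a \<Rightarrow> real) set \<Rightarrow> ('a dualtrip \<Rightarrow> ereal) \<Rightarrow> ('a dualtrip \<times> real) set" where
  "Wepi Xs k = {(w, r). w \<in> Wset Xs \<and> k w \<le> ereal r}"

definition shift_set :: "('a dualtrip \<times> real) set \<Rightarrow> ('a dualtrip \<times> real) \<Rightarrow> ('a dualtrip \<times> real) set" where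
  "shift_set E e = (\<lambda>((a, b, c), r). ((\<lambda>x. a x - fst (fst e) x, \<lambda>x. b x - fst (snd (fst e)) x, c - snd (snd (fst e))), r - snd e)) ` E"

definition Bset :: "('a dualtrip \<times> real) set" where
  "Bset = {(((\<lambda>_. 0), (\<lambda>_. 0), a), r) | a r. a > 0}"

definition fmg :: "('a \<Rightarrow> ereal) \<Rightarrow> ('a \<Rightarrow> ereal) \<Rightarrow> 'a set \<Rightarrow> 'a \<Rightarrow> ereal" where
  "fmg f g A x = sub_up (f x) (g x) + indic A x"

definition vP :: "('a \<Rightarrow> ereal) \<Rightarrow> ('a \<Rightarrow> ereal) \<Rightarrow> 'a set \<Rightarrow> ereal" where
  "vP f g A = (INF x. fmg f g A x)"

definition phiF :: "('a \<Rightarrow> ereal) \<Rightarrow> ('a \<Rightarrow> ereal) \<Rightarrow> 'a set \<Rightarrow> 'a dualtrip \<Rightarrow> 'a dualtrip \<Rightarrow> ereal" where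
  "phiF f g A u z = (case u of (us, vs, \<gamma>) \<Rightarrow> case z of (xs, ys, \<alpha>) \<Rightarrow>
      sub_lo (sub_lo (cconj g (us, vs, \<gamma>)) (cconj f (\<lambda>x. us x - xs x, \<lambda>x. - ys x, \<alpha>))) (cconj (indic A) (xs, ys, \<alpha>)))"

definition vDF :: "('a \<Rightarrow> real) set \<Rightarrow> ('a \<Rightarrow> ereal) \<Rightarrow> ('a \<Rightarrow> ereal) \<Rightarrow> 'a set \<Rightarrow> ereal" where
  "vDF Xs f g A = (SUP z\<in>Zset Xs. INF u\<in>Wdom Xs (cconj g). phiF f g A u z)"

definition vDFbar :: "('a \<Rightarrow> real) set \<Rightarrow> ('a \<Rightarrow> ereal) \<Rightarrow> ('a \<Rightarrow> ereal) \<Rightarrow> 'a set \<Rightarrow> ereal" where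
  "vDFbar Xs f g A = (INF u\<in>Wdom Xs (cconj g). SUP z\<in>Zset Xs. phiF f g A u z)"

definition fminc :: "('a \<Rightarrow> ereal) \<Rightarrow> 'a dualtrip \<Rightarrow> 'a \<Rightarrow> ereal" where
  "fminc f z x = (case z of (xs, ys, \<alpha>) \<Rightarrow> sub_up (f x) (coup x (\<lambda>y. - xs y, \<lambda>y. - ys y, \<alpha>)))"

text \<open>The set epi (f - c(., (-x*,-y*,alpha)))^c - (u*, 0, 0, g^c(u*,v*,gamma) - delta_A^c(x*,y*,alpha)).\<close>
definition piece :: "('a \<Rightarrow> real) set \<Rightarrow> ('a \<Rightarrow> ereal) \<Rightarrow> ('a \<Rightarrow> ereal) \<Rightarrow> 'a set
    \<Rightarrow> 'a dualtrip \<Rightarrow> 'a dualtrip \<Rightarrow> ('a dualtrip \<times> real) set" where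
  "piece Xs f g A u z = (case u of (us, vs, \<gamma>) \<Rightarrow>
      shift_set (Wepi Xs (cconj (fminc f z)))
        ((us, (\<lambda>_. 0), 0), real_of_ereal (sub_lo (cconj g (us, vs, \<gamma>)) (cconj (indic A) z))))"

definition Omega :: "('a \<Rightarrow> real) set \<Rightarrow> ('a \<Rightarrow> ereal) \<Rightarrow> ('a \<Rightarrow> ereal) \<Rightarrow> 'a set \<Rightarrow> ('a dualtrip \<times> real) set" where
  "Omega Xs f g A = (\<Union>z\<in>Wdom Xs (cconj (indic A)). \<Inter>u\<in>Wdom Xs (cconj g). piece Xs f g A u z)"

definition Kset :: "('a \<Rightarrow> real) set \<Rightarrow> ('a \<Rightarrow> ereal) \<Rightarrow> ('a \<Rightarrow> ereal) \<Rightarrow> 'a set \<Rightarrow> ('a dualtrip \<times> real) set" where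
  "Kset Xs f g A = (\<Inter>u\<in>Wdom Xs (cconj g). \<Union>z\<in>Wdom Xs (cconj (indic A)). piece Xs f g A u z)"

end

theory Submission
  imports Defs
begin

lemma zero_in_dual: "(\<lambda>_. 0) \<in> top_dual T"
  unfolding top_dual_def by (auto simp: linear_zero)

lemma sub_lo_inf2: "sub_lo a \<infinity> = -\<infinity>"
  unfolding sub_lo_def by (cases a) auto

lemma sub_lo_mono1: "a \<le> a' \<Longrightarrow> sub_lo a b \<le> sub_lo a' b"
  unfolding sub_lo_def by (cases a; cases a'; cases b) auto

lemma sub_lo_anti2: "b' \<le> b \<Longrightarrow> sub_lo a b \<le> sub_lo a b'"
  unfolding sub_lo_def by (cases a; cases b; cases b') auto

lemma ereal_le_by_reals:
  fixes x y :: ereal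
  assumes "\<And>s. ereal s < y \<Longrightarrow> ereal s \<le> x"
  shows "y \<le> x"
proof (rule ccontr)
  assume "\<not> y \<le> x"
  then have "x < y" by simp
  then obtain s where "x < ereal s" "ereal s < y" using ereal_dense2 by blast
  with assms[of s] show False by simp
qed

lemma cconj_fminc:
  assumes "\<forall>x. f x \<noteq> -\<infinity>" "\<alpha> > 0"
  shows "cconj (fminc f (xs,ys,\<beta>)) (us, \<lambda>_. 0, \<alpha>) = cconj f (\<lambda>x. us x - xs x, \<lambda>x. - ys x, \<beta>)"
  unfolding cconj_def
proof (rule SUP_cong[OF refl])
  fix x
  show "sub_lo (coup x (us, \<lambda>_. 0, \<alpha>)) (fminc f (xs, ys, \<beta>) x) =
        sub_lo (coup x (\<lambda>x. us x - xs x, \<lambda>x. - ys x, \<beta>)) (f x)"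
    using assms(1)[rule_format, of x] assms(2)
    unfolding fminc_def coup_def sub_lo_def sub_up_def
    by (cases "f x") auto
qed

lemma cconj_beta_mono:
  assumes "\<beta> \<le> \<beta>'"
  shows "cconj f (a, b, \<beta>') \<le> cconj f (a, b, \<beta>)"
proof -
  have pw: "sub_lo (coup x (a, b, \<beta>')) (f x) \<le> sub_lo (coup x (a, b, \<beta>)) (f x)" for x
    using assms unfolding coup_def sub_lo_def by (cases "f x"; auto)
  show ?thesis unfolding cconj_def by (rule SUP_mono) (use pw in blast)
qed

lemma cconj_indic_beta:
  assumes "cconj (indic A) (a, b, \<beta>) < \<infinity>" "\<beta> \<le> \<beta>'"
  shows "cconj (indic A) (a, b, \<beta>') = cconj (indic A) (a, b, \<beta>)"
  unfolding cconj_def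
proof (rule SUP_cong[OF refl])
  fix x
  have "x \<in> A \<Longrightarrow> b x < \<beta>"
  proof (rule ccontr)
    assume "x \<in> A" "\<not> b x < \<beta>"
    then have "sub_lo (coup x (a, b, \<beta>)) (indic A x) = \<infinity>"
      unfolding coup_def sub_lo_def indic_def by auto
    moreover have "sub_lo (coup x (a, b, \<beta>)) (indic A x) \<le> cconj (indic A) (a, b, \<beta>)"
      unfolding cconj_def by (rule SUP_upper) simp
    ultimately have "cconj (indic A) (a, b, \<beta>) = \<infinity>" by simp
    with assms(1) show False by simp
  qed
  then show "sub_lo (coup x (a, b, \<beta>')) (indic A x) = sub_lo (coup x (a, b, \<beta>)) (indic A x)"
    using assms(2) unfolding coup_def sub_lo_def indic_def by auto
qed

lemma cconj_proper_gt:
  assumes "proper_fun g"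
  shows "cconj g u > -\<infinity>"
proof -
  obtain x where x: "g x \<noteq> \<infinity>" "g x \<noteq> -\<infinity>" using assms unfolding proper_fun_def by auto
  have "sub_lo (coup x u) (g x) > -\<infinity>"
    using x unfolding sub_lo_def coup_def by (cases "g x"; auto split: prod.splits)
  also have "\<dots> \<le> cconj g u" unfolding cconj_def by (rule SUP_upper) auto
  finally show ?thesis .
qed

lemma cconj_indic_gt:
  assumes "A \<noteq> {}"
  shows "cconj (indic A) u > -\<infinity>"
proof -
  obtain x where x: "x \<in> A" using assms by auto
  have "sub_lo (coup x u) (indic A x) > -\<infinity>"
    using x unfolding sub_lo_def coup_def indic_def by (auto split: prod.splits)
  also have "\<dots> \<le> cconj (indic A) u" unfolding cconj_def by (rule SUP_upper) auto
  finally show ?thesis .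
qed

lemma cconj_fmg:
  assumes "\<alpha> > 0"
  shows "cconj (fmg f g A) (\<lambda>_. 0, \<lambda>_. 0, \<alpha>) = - vP f g A"
proof -
  have "cconj (fmg f g A) (\<lambda>_. 0, \<lambda>_. 0, \<alpha>) = (SUP x. - fmg f g A x)"
    unfolding cconj_def
    by (rule SUP_cong[OF refl]) (use assms in \<open>auto simp: coup_def sub_lo_def zero_ereal_def[symmetric]\<close>)
  also have "\<dots> = - vP f g A" unfolding vP_def by (rule ereal_SUP_uminus_eq)
  finally show ?thesis .
qed


lemma piece_mem:
  assumes pf: "\<forall>x. f x \<noteq> -\<infinity>" and u: "u \<in> Wdom Xs (cconj g)"
    and z: "z \<in> Wdom Xs (cconj (indic A))" and al: "\<alpha> > 0" and o0: "(\<lambda>_. 0) \<in> Xs"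
    and gfin: "cconj g u > -\<infinity>" and dfin: "cconj (indic A) z > -\<infinity>"
  shows "(((\<lambda>_. 0), (\<lambda>_. 0), \<alpha>), r) \<in> piece Xs f g A u z \<longleftrightarrow> ereal (-r) \<le> phiF f g A u z"
proof -
  obtain us vs \<gamma> where uu: "u = (us, vs, \<gamma>)" by (cases u)
  obtain xs ys \<beta> where zz: "z = (xs, ys, \<beta>)" by (cases z)
  have usX: "us \<in> Xs" using u uu by (auto simp: Wdom_def Wset_def)
  obtain G where G: "cconj g u = ereal G" using u gfin by (cases "cconj g u") (auto simp: Wdom_def)
  obtain D where D: "cconj (indic A) z = ereal D" using z dfin by (cases "cconj (indic A) z") (auto simp: Wdom_def)
  define Fc where "Fc = cconj f (\<lambda>x. us x - xs x, \<lambda>x. - ys x, \<beta>)"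
  define E where "E = Wepi Xs (cconj (fminc f z))"
  have sl: "sub_lo (ereal G) (ereal D) = ereal (G - D)" by (simp add: sub_lo_def)
  have pc: "piece Xs f g A u z = (\<lambda>((a,b,c),r'). ((\<lambda>x. a x - us x, \<lambda>x. b x - 0, c - 0), r' - (G - D))) ` E"
    unfolding piece_def shift_set_def E_def using G D uu sl by simp
  have ph: "phiF f g A u z = sub_lo (sub_lo (ereal G) Fc) (ereal D)"
    unfolding phiF_def Fc_def using G D uu zz by simp
  have memE: "((us, \<lambda>_. 0, \<alpha>), r') \<in> E \<longleftrightarrow> Fc \<le> ereal r'" for r'
    unfolding E_def Wepi_def Wset_def Fc_def zz using usX o0 cconj_fminc[OF pf al] by simp
  have "(((\<lambda>_. 0), (\<lambda>_. 0), \<alpha>), r) \<in> piece Xs f g A u z \<longleftrightarrow> ((us, \<lambda>_. 0, \<alpha>), r + (G - D)) \<in> E"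
  proof
    assume "(((\<lambda>_. 0), (\<lambda>_. 0), \<alpha>), r) \<in> piece Xs f g A u z"
    then obtain a b c r' where m: "((a,b,c),r') \<in> E"
      and eq: "((\<lambda>x. a x - us x, \<lambda>x. b x - 0, c - 0), r' - (G - D)) = (((\<lambda>_. 0), (\<lambda>_. 0), \<alpha>), r)"
      unfolding pc by auto
    from eq have "a = us" "b = (\<lambda>_. 0)" "c = \<alpha>" "r' = r + (G - D)"
      by (auto simp: fun_eq_iff)
    with m show "((us, \<lambda>_. 0, \<alpha>), r + (G - D)) \<in> E" by simp
  next
    assume m: "((us, \<lambda>_. 0, \<alpha>), r + (G - D)) \<in> E"
    show "(((\<lambda>_. 0), (\<lambda>_. 0), \<alpha>), r) \<in> piece Xs f g A u z"
      unfolding pc by (rule image_eqI[OF _ m]) simp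
  qed
  also have "\<dots> \<longleftrightarrow> Fc \<le> ereal (r + (G - D))" by (rule memE)
  also have "\<dots> \<longleftrightarrow> ereal (-r) \<le> sub_lo (sub_lo (ereal G) Fc) (ereal D)"
    by (cases Fc) (auto simp: sub_lo_def)
  finally show ?thesis using ph by simp
qed

lemma B_cond:
  "S \<inter> Bset \<subseteq> E \<inter> Bset \<longleftrightarrow> (\<forall>\<alpha>>0. \<forall>r. (((\<lambda>_. 0::real), (\<lambda>_. 0::real), \<alpha>), r) \<in> S \<longrightarrow> (((\<lambda>_. 0), (\<lambda>_. 0), \<alpha>), r) \<in> E)"
  unfolding Bset_def by blast

theorem proposition4p2:
  fixes T :: "'a::real_vector topology"
    and f g :: "'a \<Rightarrow> ereal" and A :: "'a set"
  assumes "lcs_topology T"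
    and "\<exists>x::'a. x \<noteq> 0"
    and "proper_fun f" and "convex_fun f"
    and "proper_fun g" and "convex_fun g"
    and "efdom f \<subseteq> efdom g"
    and "A \<noteq> {}"
  shows "(vP f g A \<ge> vDF (top_dual T) f g A \<longleftrightarrow>
            Omega (top_dual T) f g A \<inter> Bset \<subseteq> Wepi (top_dual T) (cconj (fmg f g A)) \<inter> Bset)
       \<and> (vP f g A \<ge> vDFbar (top_dual T) f g A \<longleftrightarrow>
            Kset (top_dual T) f g A \<inter> Bset \<subseteq> Wepi (top_dual T) (cconj (fmg f g A)) \<inter> Bset)"
proof -
  define Xs where "Xs = top_dual T"
  define Dg where "Dg = Wdom Xs (cconj g)"
  define Dd where "Dd = Wdom Xs (cconj (indic A))"
  define \<phi> where "\<phi> = phiF f g A"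
  define v where "v = vP f g A"
  have o0: "(\<lambda>_. 0) \<in> Xs" unfolding Xs_def by (rule zero_in_dual)
  have pf: "\<forall>x. f x \<noteq> -\<infinity>" using assms(3) unfolding proper_fun_def by auto
  have pm: "u \<in> Dg \<Longrightarrow> z \<in> Dd \<Longrightarrow> \<alpha> > 0 \<Longrightarrow>
      (((\<lambda>_. 0), (\<lambda>_. 0), \<alpha>), r) \<in> piece Xs f g A u z \<longleftrightarrow> ereal (-r) \<le> \<phi> u z" for u z \<alpha> r
    unfolding Dg_def Dd_def \<phi>_def
    by (rule piece_mem[OF pf _ _ _ o0 cconj_proper_gt[OF assms(5)] cconj_indic_gt[OF assms(8)]])
  have mO: "\<alpha> > 0 \<Longrightarrow> (((\<lambda>_. 0), (\<lambda>_. 0), \<alpha>), r) \<in> Omega Xs f g A \<longleftrightarrow>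
       (\<exists>z\<in>Dd. \<forall>u\<in>Dg. ereal (-r) \<le> \<phi> u z)" for \<alpha> r
    unfolding Omega_def using pm by (auto simp flip: Dg_def Dd_def)
  have mK: "\<alpha> > 0 \<Longrightarrow> (((\<lambda>_. 0), (\<lambda>_. 0), \<alpha>), r) \<in> Kset Xs f g A \<longleftrightarrow>
       (\<forall>u\<in>Dg. \<exists>z\<in>Dd. ereal (-r) \<le> \<phi> u z)" for \<alpha> r
    unfolding Kset_def using pm by (auto simp flip: Dg_def Dd_def)
  have mE: "\<alpha> > 0 \<Longrightarrow> (((\<lambda>_. 0), (\<lambda>_. 0), \<alpha>), r) \<in> Wepi Xs (cconj (fmg f g A)) \<longleftrightarrow> ereal (-r) \<le> v" for \<alpha> r
    unfolding Wepi_def Wset_def v_def using o0 cconj_fmg[of \<alpha> f g A]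
    by (cases "vP f g A") auto
  have condO: "Omega Xs f g A \<inter> Bset \<subseteq> Wepi Xs (cconj (fmg f g A)) \<inter> Bset \<longleftrightarrow>
      (\<forall>s. (\<exists>z\<in>Dd. \<forall>u\<in>Dg. ereal s \<le> \<phi> u z) \<longrightarrow> ereal s \<le> v)"
    unfolding B_cond
  proof (intro iffI allI impI)
    fix s assume H: "\<forall>\<alpha>>0. \<forall>r. (((\<lambda>_. 0), (\<lambda>_. 0), \<alpha>), r) \<in> Omega Xs f g A \<longrightarrow>
        (((\<lambda>_. 0), (\<lambda>_. 0), \<alpha>), r) \<in> Wepi Xs (cconj (fmg f g A))"
      and c: "\<exists>z\<in>Dd. \<forall>u\<in>Dg. ereal s \<le> \<phi> u z"
    then show "ereal s \<le> v" using mO[of 1 "-s"] mE[of 1 "-s"] by auto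
  next
    fix \<alpha> :: real and r assume H: "\<forall>s. (\<exists>z\<in>Dd. \<forall>u\<in>Dg. ereal s \<le> \<phi> u z) \<longrightarrow> ereal s \<le> v"
      and a: "\<alpha> > 0" and m: "(((\<lambda>_. 0), (\<lambda>_. 0), \<alpha>), r) \<in> Omega Xs f g A"
    then show "(((\<lambda>_. 0), (\<lambda>_. 0), \<alpha>), r) \<in> Wepi Xs (cconj (fmg f g A))"
      using mO[OF a, of r] mE[OF a, of r] by auto
  qed
  have condK: "Kset Xs f g A \<inter> Bset \<subseteq> Wepi Xs (cconj (fmg f g A)) \<inter> Bset \<longleftrightarrow>
      (\<forall>s. (\<forall>u\<in>Dg. \<exists>z\<in>Dd. ereal s \<le> \<phi> u z) \<longrightarrow> ereal s \<le> v)"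
    unfolding B_cond
  proof (intro iffI allI impI)
    fix s assume H: "\<forall>\<alpha>>0. \<forall>r. (((\<lambda>_. 0), (\<lambda>_. 0), \<alpha>), r) \<in> Kset Xs f g A \<longrightarrow>
        (((\<lambda>_. 0), (\<lambda>_. 0), \<alpha>), r) \<in> Wepi Xs (cconj (fmg f g A))"
      and c: "\<forall>u\<in>Dg. \<exists>z\<in>Dd. ereal s \<le> \<phi> u z"
    then show "ereal s \<le> v" using mK[of 1 "-s"] mE[of 1 "-s"] by auto
  next
    fix \<alpha> :: real and r assume H: "\<forall>s. (\<forall>u\<in>Dg. \<exists>z\<in>Dd. ereal s \<le> \<phi> u z) \<longrightarrow> ereal s \<le> v"
      and a: "\<alpha> > 0" and m: "(((\<lambda>_. 0), (\<lambda>_. 0), \<alpha>), r) \<in> Kset Xs f g A"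
    then show "(((\<lambda>_. 0), (\<lambda>_. 0), \<alpha>), r) \<in> Wepi Xs (cconj (fmg f g A))"
      using mK[OF a, of r] mE[OF a, of r] by auto
  qed
  have phinf: "z \<in> Wset Xs \<Longrightarrow> z \<notin> Dd \<Longrightarrow> \<phi> u z = -\<infinity>" for u z
  proof -
    assume "z \<in> Wset Xs" "z \<notin> Dd"
    then have "cconj (indic A) z = \<infinity>" unfolding Dd_def Wdom_def by (simp add: less_top)
    then show ?thesis unfolding \<phi>_def phiF_def by (cases u; cases z) (simp add: sub_lo_inf2)
  qed
  have z0: "((\<lambda>_. 0), (\<lambda>_. 0), 1) \<in> Dd"
  proof -
    have "cconj (indic A) ((\<lambda>_. 0), (\<lambda>_. 0), 1) \<le> 0"
      unfolding cconj_def
      by (rule SUP_least) (auto simp: coup_def sub_lo_def indic_def zero_ereal_def)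
    then show ?thesis unfolding Dd_def Wdom_def Wset_def using o0 by auto
  qed
  have ZW: "Zset Xs \<subseteq> Wset Xs" unfolding Zset_def Wset_def by auto
  have lift: "z \<in> Dd \<Longrightarrow> \<exists>z'\<in>Zset Xs. \<forall>u\<in>Dg. \<phi> u z \<le> \<phi> u z'" for z
  proof -
    assume zD: "z \<in> Dd"
    obtain xs ys \<beta> where zz: "z = (xs, ys, \<beta>)" by (cases z)
    have xy: "xs \<in> Xs" "ys \<in> Xs" and lt: "cconj (indic A) (xs, ys, \<beta>) < \<infinity>"
      using zD zz unfolding Dd_def Wdom_def Wset_def by auto
    have eqD: "cconj (indic A) (xs, ys, max \<beta> 1) = cconj (indic A) (xs, ys, \<beta>)"
      by (rule cconj_indic_beta[OF lt]) simp
    have "\<forall>u\<in>Dg. \<phi> u z \<le> \<phi> u (xs, ys, max \<beta> 1)"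
    proof
      fix u :: "('a \<Rightarrow> real) \<times> ('a \<Rightarrow> real) \<times> real"
      obtain us vs \<gamma> where uu: "u = (us, vs, \<gamma>)" by (cases u)
      have F: "cconj f (\<lambda>x. us x - xs x, \<lambda>x. - ys x, max \<beta> 1) \<le> cconj f (\<lambda>x. us x - xs x, \<lambda>x. - ys x, \<beta>)"
        by (rule cconj_beta_mono) simp
      show "\<phi> u z \<le> \<phi> u (xs, ys, max \<beta> 1)"
        unfolding \<phi>_def phiF_def uu zz
        by (simp only: prod.case eqD) (intro sub_lo_mono1 sub_lo_anti2 F)
    qed
    moreover have "(xs, ys, max \<beta> 1) \<in> Zset Xs" using xy unfolding Zset_def by auto
    ultimately show ?thesis by blast
  qed
  have P1: "vDF Xs f g A \<le> v \<longleftrightarrow> (\<forall>s. (\<exists>z\<in>Dd. \<forall>u\<in>Dg. ereal s \<le> \<phi> u z) \<longrightarrow> ereal s \<le> v)"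
  proof (intro iffI allI impI)
    fix s assume H: "vDF Xs f g A \<le> v" and c: "\<exists>z\<in>Dd. \<forall>u\<in>Dg. ereal s \<le> \<phi> u z"
    then obtain z where zD: "z \<in> Dd" and zs: "\<forall>u\<in>Dg. ereal s \<le> \<phi> u z" by blast
    obtain z' where z': "z' \<in> Zset Xs" "\<forall>u\<in>Dg. \<phi> u z \<le> \<phi> u z'" using lift[OF zD] by blast
    have "ereal s \<le> (INF u\<in>Dg. \<phi> u z')"
      by (rule INF_greatest) (use zs z' in \<open>fastforce intro: order_trans\<close>)
    also have "\<dots> \<le> vDF Xs f g A"
      unfolding vDF_def by (rule SUP_upper2[OF z'(1)]) (simp add: Dg_def \<phi>_def)
    finally show "ereal s \<le> v" using H by simp
  next
    assume H: "\<forall>s. (\<exists>z\<in>Dd. \<forall>u\<in>Dg. ereal s \<le> \<phi> u z) \<longrightarrow> ereal s \<le> v"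
    show "vDF Xs f g A \<le> v"
    proof (rule ereal_le_by_reals)
      fix s assume "ereal s < vDF Xs f g A"
      then obtain z where zZ: "z \<in> Zset Xs" and zs: "ereal s < (INF u\<in>Dg. \<phi> u z)"
        unfolding vDF_def less_SUP_iff by (auto simp flip: Dg_def \<phi>_def)
      have "\<exists>z\<in>Dd. \<forall>u\<in>Dg. ereal s \<le> \<phi> u z"
      proof (cases "Dg = {}")
        case True then show ?thesis using z0 by blast
      next
        case False
        have "z \<in> Dd"
        proof (rule ccontr)
          assume "z \<notin> Dd"
          then have "\<forall>u. \<phi> u z = -\<infinity>" using phinf ZW zZ by blast
          then have "(INF u\<in>Dg. \<phi> u z) = (INF u\<in>Dg. -\<infinity>)" by (intro INF_cong) auto
          then have "(INF u\<in>Dg. \<phi> u z) = -\<infinity>" using False by simp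
          with zs show False by simp
        qed
        moreover have "\<forall>u\<in>Dg. ereal s \<le> \<phi> u z"
          using zs by (meson INF_lower less_imp_le order_trans)
        ultimately show ?thesis by blast
      qed
      then show "ereal s \<le> v" using H by blast
    qed
  qed
  have P2: "vDFbar Xs f g A \<le> v \<longleftrightarrow> (\<forall>s. (\<forall>u\<in>Dg. \<exists>z\<in>Dd. ereal s \<le> \<phi> u z) \<longrightarrow> ereal s \<le> v)"
  proof (intro iffI allI impI)
    fix s assume H: "vDFbar Xs f g A \<le> v" and c: "\<forall>u\<in>Dg. \<exists>z\<in>Dd. ereal s \<le> \<phi> u z"
    have "ereal s \<le> (INF u\<in>Dg. SUP z\<in>Zset Xs. \<phi> u z)"
    proof (rule INF_greatest)
      fix u assume uD: "u \<in> Dg"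
      obtain z where zD: "z \<in> Dd" and zs: "ereal s \<le> \<phi> u z" using c uD by blast
      obtain z' where z': "z' \<in> Zset Xs" "\<forall>u\<in>Dg. \<phi> u z \<le> \<phi> u z'" using lift[OF zD] by blast
      have "ereal s \<le> \<phi> u z'" using zs z'(2) uD by (blast intro: order_trans)
      also have "\<dots> \<le> (SUP z\<in>Zset Xs. \<phi> u z)" by (rule SUP_upper[OF z'(1)])
      finally show "ereal s \<le> (SUP z\<in>Zset Xs. \<phi> u z)" .
    qed
    also have "\<dots> = vDFbar Xs f g A" unfolding vDFbar_def Dg_def \<phi>_def ..
    finally show "ereal s \<le> v" using H by simp
  next
    assume H: "\<forall>s. (\<forall>u\<in>Dg. \<exists>z\<in>Dd. ereal s \<le> \<phi> u z) \<longrightarrow> ereal s \<le> v"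
    show "vDFbar Xs f g A \<le> v"
    proof (rule ereal_le_by_reals)
      fix s assume sl: "ereal s < vDFbar Xs f g A"
      have "\<forall>u\<in>Dg. \<exists>z\<in>Dd. ereal s \<le> \<phi> u z"
      proof
        fix u assume uD: "u \<in> Dg"
        have "ereal s < (SUP z\<in>Zset Xs. \<phi> u z)"
          using sl uD unfolding vDFbar_def by (auto simp flip: Dg_def \<phi>_def dest: less_INF_D)
        then obtain z where zZ: "z \<in> Zset Xs" and zs: "ereal s < \<phi> u z"
          unfolding less_SUP_iff by blast
        have "z \<in> Dd"
        proof (rule ccontr)
          assume "z \<notin> Dd"
          then have "\<phi> u z = -\<infinity>" using phinf ZW zZ by blast
          with zs show False by simp
        qed
        with zs show "\<exists>z\<in>Dd. ereal s \<le> \<phi> u z" by (auto intro: less_imp_le)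
      qed
      then show "ereal s \<le> v" using H by blast
    qed
  qed
  show ?thesis
    using P1 P2 condO condK unfolding Xs_def v_def by simp
qed

end
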